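(* For every $\lambda\in\mathbb{R}$, the real $7$-dimensional Lie algebra $\mathfrak{n}_\lambda$ with basis $e_1,\dots,e_7$ whose nonzero brackets (up to antisymmetry) are $[e_1,e_2]=e_4$, $[e_1,e_3]=e_6$, $[e_1,e_4]=e_5$, $[e_1,e_5]=e_7$, $[e_2,e_3]=\lambda e_5$, $[e_2,e_4]=e_6$, $[e_2,e_6]=e_7$, $[e_3,e_4]=(1-\lambda)e_7$ is an Einstein nilradical.
   Context: A real nilpotent Lie algebra $\mathfrak{n}$ is called an Einstein nilradical if it admits an inner product such that the left-invariant Riemannian metric it defines on the simply connected nilpotent Lie group with Lie algebra $\mathfrak{n}$ is a nilsoliton, i.e. its Ricci operator satisfies $\mathrm{Ric}=c\,\mathrm{Id}+D$ for some $c\in\mathbb{R}$ and some derivation $D$ of $\mathfrak{n}$. Brackets of basis elements not listed are zero. *)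

theory Defs
  imports "HOL-Analysis.Analysis"
begin

definition is_lie_bracket :: "('a::real_vector \<Rightarrow> 'a \<Rightarrow> 'a) \<Rightarrow> bool" where
  "is_lie_bracket b \<longleftrightarrow> bilinear b \<and> (\<forall>x. b x x = 0) \<and>
     (\<forall>x y z. b x (b y z) + b y (b z x) + b z (b x y) = 0)"

definition is_nilpotent_bracket :: "('a::real_vector \<Rightarrow> 'a \<Rightarrow> 'a) \<Rightarrow> bool" where
  "is_nilpotent_bracket b \<longleftrightarrow>
     (\<exists>k. \<forall>xs y. length xs = k \<longrightarrow> foldr b xs y = 0)"

definition is_derivation :: "('a::real_vector \<Rightarrow> 'a \<Rightarrow> 'a) \<Rightarrow> ('a \<Rightarrow> 'a) \<Rightarrow> bool" where
  "is_derivation b D \<longleftrightarrow> linear D \<and> (\<forall>x y. D (b x y) = b (D x) y + b x (D y))"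

definition is_inner_prod :: "('a::real_vector \<Rightarrow> 'a \<Rightarrow> real) \<Rightarrow> bool" where
  "is_inner_prod ip \<longleftrightarrow> bilinear ip \<and> (\<forall>x y. ip x y = ip y x) \<and>
     (\<forall>x. x \<noteq> 0 \<longrightarrow> ip x x > 0)"

definition orthonormal_basis :: "('a::real_vector \<Rightarrow> 'a \<Rightarrow> real) \<Rightarrow> ('n::finite \<Rightarrow> 'a) \<Rightarrow> bool" where
  "orthonormal_basis ip B \<longleftrightarrow> (\<forall>i j. ip (B i) (B j) = (if i = j then 1 else 0))
     \<and> span (range B) = UNIV"

text \<open>Ricci form of the left-invariant metric on a nilpotent Lie group, computed with
  an orthonormal basis B of the metric Lie algebra (standard formula for nilpotent
  Lie algebras):
  ric(X,Y) = -1/2 sum_ij <[X,Bi],Bj><[Y,Bi],Bj> + 1/4 sum_ij <[Bi,Bj],X><[Bi,Bj],Y>.\<close>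
definition ricci_form :: "('a::real_vector \<Rightarrow> 'a \<Rightarrow> 'a) \<Rightarrow> ('a \<Rightarrow> 'a \<Rightarrow> real)
    \<Rightarrow> ('n::finite \<Rightarrow> 'a) \<Rightarrow> 'a \<Rightarrow> 'a \<Rightarrow> real" where
  "ricci_form b ip B X Y =
     - (1/2) * (\<Sum>i\<in>UNIV. \<Sum>j\<in>UNIV. ip (b X (B i)) (B j) * ip (b Y (B i)) (B j))
     + (1/4) * (\<Sum>i\<in>UNIV. \<Sum>j\<in>UNIV. ip (b (B i) (B j)) X * ip (b (B i) (B j)) Y)"

definition ricci_op :: "('a::real_vector \<Rightarrow> 'a \<Rightarrow> 'a) \<Rightarrow> ('a \<Rightarrow> 'a \<Rightarrow> real)
    \<Rightarrow> ('n::finite \<Rightarrow> 'a) \<Rightarrow> 'a \<Rightarrow> 'a" where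
  "ricci_op b ip B X = (\<Sum>k\<in>UNIV. ricci_form b ip B X (B k) *\<^sub>R B k)"

definition is_nilsoliton :: "('a::real_vector \<Rightarrow> 'a \<Rightarrow> 'a) \<Rightarrow> ('a \<Rightarrow> 'a \<Rightarrow> real)
    \<Rightarrow> ('n::finite \<Rightarrow> 'a) \<Rightarrow> bool" where
  "is_nilsoliton b ip B \<longleftrightarrow>
     (\<exists>c D. is_derivation b D \<and> (\<forall>X. ricci_op b ip B X = c *\<^sub>R X + D X))"

text \<open>Einstein nilradical: a nilpotent real Lie algebra admitting an inner product
  whose metric is a nilsoliton (Ricci operator computed w.r.t. an orthonormal basis;
  it does not depend on the choice of that basis).\<close>
definition einstein_nilradical :: "(real^'n \<Rightarrow> real^'n \<Rightarrow> real^'n) \<Rightarrow> bool" where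
  "einstein_nilradical b \<longleftrightarrow> is_lie_bracket b \<and> is_nilpotent_bracket b \<and>
     (\<exists>ip. is_inner_prod ip \<and>
        (\<exists>B :: 'n \<Rightarrow> real^'n. orthonormal_basis ip B \<and> is_nilsoliton b ip B))"

definition ee :: "nat \<Rightarrow> real^7" where
  "ee k = axis (of_nat k) 1"

definition coord :: "real^7 \<Rightarrow> nat \<Rightarrow> real" where
  "coord x k = x $ (of_nat k)"

definition nbr_basis :: "real \<Rightarrow> nat \<Rightarrow> nat \<Rightarrow> real^7" where
  "nbr_basis lam i j =
    (if (i,j) = (1,2) then ee 4 else if (i,j) = (2,1) then - ee 4
     else if (i,j) = (1,3) then ee 6 else if (i,j) = (3,1) then - ee 6
     else if (i,j) = (1,4) then ee 5 else if (i,j) = (4,1) then - ee 5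
     else if (i,j) = (1,5) then ee 7 else if (i,j) = (5,1) then - ee 7
     else if (i,j) = (2,3) then lam *\<^sub>R ee 5 else if (i,j) = (3,2) then - (lam *\<^sub>R ee 5)
     else if (i,j) = (2,4) then ee 6 else if (i,j) = (4,2) then - ee 6
     else if (i,j) = (2,6) then ee 7 else if (i,j) = (6,2) then - ee 7
     else if (i,j) = (3,4) then (1 - lam) *\<^sub>R ee 7
     else if (i,j) = (4,3) then - ((1 - lam) *\<^sub>R ee 7)
     else 0)"

definition nbr :: "real \<Rightarrow> real^7 \<Rightarrow> real^7 \<Rightarrow> real^7" where
  "nbr lam x y = (\<Sum>i\<in>{1..7}. \<Sum>j\<in>{1..7}. (coord x i * coord y j) *\<^sub>R nbr_basis lam i j)"

end

theory Submission imports Defs begin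
lemma exhaust_7:
  fixes x :: 7
  shows "x = 1 \<or> x = 2 \<or> x = 3 \<or> x = 4 \<or> x = 5 \<or> x = 6 \<or> x = 7"
proof (induct x)
  case (of_int z)
  then have "z = 0 \<or> z = 1 \<or> z = 2 \<or> z = 3 \<or> z = 4 \<or> z = 5 \<or> z = 6" by fastforce
  then show ?case by auto
qed
lemma forall_7: "(\<forall>i::7. P i) \<longleftrightarrow> P 1 \<and> P 2 \<and> P 3 \<and> P 4 \<and> P 5 \<and> P 6 \<and> P 7"
  by (metis exhaust_7)
lemma UNIV_7: "UNIV = {1, 2, 3, 4, 5, 6, 7::7}"
  using exhaust_7 by auto
lemma sum_7: "sum f (UNIV::7 set) = f 1 + f 2 + f 3 + f 4 + f 5 + f 6 + f 7"
  unfolding UNIV_7 by (simp add: ac_simps)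

lemma sum_17: "(\<Sum>i\<in>{1..7::nat}. f i) = f 1 + f 2 + f 3 + f 4 + f 5 + f 6 + f 7"
  by (simp add: eval_nat_numeral sum.atLeast_Suc_atMost ac_simps)

lemma nbr_comp:
  "nbr lam x y $ k = (if k = 4 then x$1*y$2 - x$2*y$1
     else if k = 5 then x$1*y$4 - x$4*y$1 + lam*(x$2*y$3 - x$3*y$2)
     else if k = 6 then x$1*y$3 - x$3*y$1 + x$2*y$4 - x$4*y$2
     else if k = 7 then x$1*y$5 - x$5*y$1 + x$2*y$6 - x$6*y$2 + (1-lam)*(x$3*y$4 - x$4*y$3)
     else 0)"
  using exhaust_7[of k]
  unfolding nbr_def sum_17 vector_add_component vector_scaleR_component
  apply (simp add: nbr_basis_def ee_def coord_def axis_def)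
  apply (elim disjE; simp add: algebra_simps)
  done

definition ipw :: "(7 \<Rightarrow> real) \<Rightarrow> real^7 \<Rightarrow> real^7 \<Rightarrow> real" where
  "ipw r x y = (\<Sum>k\<in>UNIV. x$k * y$k / (r k)^2)"
definition Bw :: "(7 \<Rightarrow> real) \<Rightarrow> 7 \<Rightarrow> real^7" where
  "Bw r i = r i *\<^sub>R axis i 1"

lemma ip_B: "ipw r u (Bw r j) = u$j * r j / (r j)^2"
proof -
  have "ipw r u (Bw r j) = (\<Sum>k\<in>UNIV. if k = j then u$j * r j / (r j)^2 else 0)"
    unfolding ipw_def Bw_def by (rule sum.cong) (auto simp: axis_def)
  then show ?thesis by simp
qed

lemma ip_B': "ipw r (Bw r j) u = u$j * r j / (r j)^2"
proof -
  have "ipw r (Bw r j) u = (\<Sum>k\<in>UNIV. if k = j then u$j * r j / (r j)^2 else 0)"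
    unfolding ipw_def Bw_def by (rule sum.cong) (auto simp: axis_def)
  then show ?thesis by simp
qed

lemma Bw_comp: "Bw r i $ k = (if k = i then r i else 0)"
  by (simp add: Bw_def axis_def)


definition bt1 :: "(7 \<Rightarrow> real) \<Rightarrow> real" where "bt1 r = (r 1 * r 2 / r 4)^2"
definition bt2 :: "(7 \<Rightarrow> real) \<Rightarrow> real" where "bt2 r = (r 1 * r 3 / r 6)^2"
definition bt3 :: "(7 \<Rightarrow> real) \<Rightarrow> real" where "bt3 r = (r 1 * r 4 / r 5)^2"
definition bt4 :: "(7 \<Rightarrow> real) \<Rightarrow> real" where "bt4 r = (r 1 * r 5 / r 7)^2"
definition bt5 :: "real \<Rightarrow> (7 \<Rightarrow> real) \<Rightarrow> real" where "bt5 lam r = lam^2 * (r 2 * r 3 / r 5)^2"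
definition bt6 :: "(7 \<Rightarrow> real) \<Rightarrow> real" where "bt6 r = (r 2 * r 4 / r 6)^2"
definition bt7 :: "(7 \<Rightarrow> real) \<Rightarrow> real" where "bt7 r = (r 2 * r 6 / r 7)^2"
definition bt8 :: "real \<Rightarrow> (7 \<Rightarrow> real) \<Rightarrow> real" where "bt8 lam r = (1-lam)^2 * (r 3 * r 4 / r 7)^2"

lemmas ric_unf = ricci_op_def ricci_form_def sum_7 ip_B ip_B'
lemmas ric_unf2 = ipw_def sum_7
lemmas bt_defs = bt1_def bt2_def bt3_def bt4_def bt5_def bt6_def bt7_def bt8_def

lemma ric1: assumes "\<And>i. r i \<noteq> 0"
  shows "ricci_op (nbr lam) (ipw r) (Bw r) X $ 1 = (- (bt1 r + bt2 r + bt3 r + bt4 r)/2) * X$1"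
  unfolding ric_unf 
  apply (simp add: Bw_comp nbr_comp)
  unfolding ric_unf2
  using assms apply (simp add: Bw_comp nbr_comp bt_defs power2_eq_square power4_eq_xxxx field_simps)
  done

lemma ric2: assumes "\<And>i. r i \<noteq> 0"
  shows "ricci_op (nbr lam) (ipw r) (Bw r) X $ 2 = (- (bt1 r + bt5 lam r + bt6 r + bt7 r)/2) * X$2"
  unfolding ric_unf 
  apply (simp add: Bw_comp nbr_comp)
  unfolding ric_unf2
  using assms apply (simp add: Bw_comp nbr_comp bt_defs power2_eq_square power4_eq_xxxx field_simps)
  done

lemma ric3: assumes "\<And>i. r i \<noteq> 0"
  shows "ricci_op (nbr lam) (ipw r) (Bw r) X $ 3 = (- (bt2 r + bt5 lam r + bt8 lam r)/2) * X$3"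
  unfolding ric_unf 
  apply (simp add: Bw_comp nbr_comp)
  unfolding ric_unf2
  using assms apply (simp add: Bw_comp nbr_comp bt_defs power2_eq_square power4_eq_xxxx field_simps)
  done

lemma ric4: assumes "\<And>i. r i \<noteq> 0"
  shows "ricci_op (nbr lam) (ipw r) (Bw r) X $ 4 = ((bt1 r - bt3 r - bt6 r - bt8 lam r)/2) * X$4"
  unfolding ric_unf 
  apply (simp add: Bw_comp nbr_comp)
  unfolding ric_unf2
  using assms apply (simp add: Bw_comp nbr_comp bt_defs power2_eq_square power4_eq_xxxx field_simps)
  done

lemma ric5: assumes "\<And>i. r i \<noteq> 0"
  shows "ricci_op (nbr lam) (ipw r) (Bw r) X $ 5 = ((bt3 r + bt5 lam r - bt4 r)/2) * X$5"
  unfolding ric_unf 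
  apply (simp add: Bw_comp nbr_comp)
  unfolding ric_unf2
  using assms apply (simp add: Bw_comp nbr_comp bt_defs power2_eq_square power4_eq_xxxx field_simps)
  done

lemma ric6: assumes "\<And>i. r i \<noteq> 0"
  shows "ricci_op (nbr lam) (ipw r) (Bw r) X $ 6 = ((bt2 r + bt6 r - bt7 r)/2) * X$6"
  unfolding ric_unf 
  apply (simp add: Bw_comp nbr_comp)
  unfolding ric_unf2
  using assms apply (simp add: Bw_comp nbr_comp bt_defs power2_eq_square power4_eq_xxxx field_simps)
  done

lemma ric7: assumes "\<And>i. r i \<noteq> 0"
  shows "ricci_op (nbr lam) (ipw r) (Bw r) X $ 7 = ((bt4 r + bt7 r + bt8 lam r)/2) * X$7"
  unfolding ric_unf 
  apply (simp add: Bw_comp nbr_comp)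
  unfolding ric_unf2
  using assms apply (simp add: Bw_comp nbr_comp bt_defs power2_eq_square power4_eq_xxxx field_simps)
  done


lemma nbr_add1: "nbr lam (x + x') y = nbr lam x y + nbr lam x' y"
  by (simp add: vec_eq_iff forall_7 nbr_comp algebra_simps)
lemma nbr_add2: "nbr lam x (y + y') = nbr lam x y + nbr lam x y'"
  by (simp add: vec_eq_iff forall_7 nbr_comp algebra_simps)
lemma nbr_scale1: "nbr lam (c *\<^sub>R x) y = c *\<^sub>R nbr lam x y"
  by (simp add: vec_eq_iff forall_7 nbr_comp algebra_simps)
lemma nbr_scale2: "nbr lam x (c *\<^sub>R y) = c *\<^sub>R nbr lam x y"
  by (simp add: vec_eq_iff forall_7 nbr_comp algebra_simps)

lemma nbr_bilinear: "bilinear (nbr lam)"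
  unfolding bilinear_def
  by (auto intro!: linearI simp: nbr_add1 nbr_add2 nbr_scale1 nbr_scale2)

lemma jac: "nbr lam x (nbr lam y z) + nbr lam y (nbr lam z x) + nbr lam z (nbr lam x y) = 0"
  apply (simp add: vec_eq_iff forall_7 nbr_comp)
  apply (simp add: algebra_simps)
  done

lemma nbr_lie: "is_lie_bracket (nbr lam)"
  unfolding is_lie_bracket_def
proof (intro conjI allI nbr_bilinear jac)
  show "nbr lam x x = 0" for x by (simp add: vec_eq_iff forall_7 nbr_comp)
qed

lemma l4: "length xs = 4 \<Longrightarrow> \<exists>a b c d. xs = [a,b,c,d]"
  by (cases xs; cases "tl xs"; cases "tl (tl xs)"; cases "tl (tl (tl xs))"; auto)

lemma nbr_nil: "is_nilpotent_bracket (nbr lam)"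
  unfolding is_nilpotent_bracket_def
proof (intro exI allI impI)
  fix xs :: "(real^7) list" and y
  assume "length xs = 4"
  then obtain a b c d where "xs = [a,b,c,d]" using l4 by blast
  then show "foldr (nbr lam) xs y = 0"
    by (simp add: vec_eq_iff forall_7 nbr_comp)
qed

definition dd :: "7 \<Rightarrow> real" where
  "dd i = (if i = 1 \<or> i = 2 then 2 else if i = 3 \<or> i = 4 then 4 else if i = 5 \<or> i = 6 then 6 else 8)"
definition Dop :: "real^7 \<Rightarrow> real^7" where
  "Dop x = (\<chi> i. dd i * x$i)"

lemma Dop_comp: "Dop x $ i = dd i * x $ i" by (simp add: Dop_def)

lemma Dop_der: "is_derivation (nbr lam) Dop"
  unfolding is_derivation_def
  apply (intro conjI allI linearI)
    apply (simp_all add: vec_eq_iff forall_7 Dop_comp dd_def algebra_simps nbr_comp)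
  done

lemma ipw_inner: assumes "\<And>i. r i \<noteq> 0" shows "is_inner_prod (ipw r)"
  unfolding is_inner_prod_def
proof (intro conjI allI impI)
  show "bilinear (ipw r)"
    unfolding bilinear_def
    by (auto intro!: linearI simp: ipw_def sum.distrib sum_distrib_left algebra_simps add_divide_distrib)
  show "ipw r x y = ipw r y x" for x y by (simp add: ipw_def mult.commute)
  fix x :: "real^7" assume "x \<noteq> 0"
  then obtain k where k: "x$k \<noteq> 0" by (auto simp: vec_eq_iff)
  show "ipw r x x > 0" unfolding ipw_def
  proof (rule sum_pos2[of _ k])
    show "0 < x $ k * x $ k / (r k)\<^sup>2" using k assms[of k] by (intro divide_pos_pos) (auto simp: zero_less_mult_iff)
    show "0 \<le> x $ i * x $ i / (r i)\<^sup>2" for i by simp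
  qed auto
qed

lemma Bw_onb: assumes "\<And>i. r i \<noteq> 0" shows "orthonormal_basis (ipw r) (Bw r)"
  unfolding orthonormal_basis_def
proof (intro conjI allI)
  show "ipw r (Bw r i) (Bw r j) = (if i = j then 1 else 0)" for i j
    using assms[of i] assms[of j] by (simp add: ip_B Bw_comp power2_eq_square)
  have "Basis \<subseteq> span (range (Bw r))"
  proof
    fix v :: "real^7" assume "v \<in> Basis"
    then obtain i where v: "v = axis i 1" by (auto simp: Basis_vec_def)
    have "v = (1 / r i) *\<^sub>R Bw r i" using assms[of i] by (simp add: v Bw_def)
    then show "v \<in> span (range (Bw r))" by (simp add: span_base span_scale)
  qed
  then have "span Basis \<subseteq> span (range (Bw r))"
    using span_minimal[OF _ subspace_span] by blast
  then show "span (range (Bw r)) = UNIV" by auto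
qed
lemma exist_ab:
  fixes lam :: real
  shows "\<exists>a b. a > 1 \<and> b \<ge> 0 \<and> a + b \<le> 4 \<and>
     lam^2 * (a * (a - 1)) = (5 - a - b) * (4 - a - b) \<and>
     b * (b + 1) = (1 - lam)^2 * (a * (a - 1))"
proof (cases "lam = 0")
  case True
  then show ?thesis by (intro exI[of _ "5/2"] exI[of _ "3/2"]) (simp add: power2_eq_square)
next
  case False
  define mu where "mu = (1 - lam)^2"
  have mu: "mu \<ge> 0" by (simp add: mu_def)
  have l2: "lam^2 > 0" using False by simp
  define Q where "Q s = (5 - s) * (4 - s)" for s :: real
  define A where "A s = (1 + sqrt (1 + 4 * Q s / lam^2)) / 2" for s
  define B where "B s = (-1 + sqrt (1 + 4 * mu * Q s / lam^2)) / 2" for s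
  define G where "G s = A s + B s - s" for s
  have cont: "continuous_on {1..4} G"
    unfolding G_def A_def B_def Q_def using l2 by (intro continuous_intros) auto
  have Q1: "Q 1 = 12" by (simp add: Q_def)
  have "A 1 \<ge> 1" unfolding A_def Q1 using l2 by simp
  moreover have "B 1 \<ge> 0" unfolding B_def Q1 using l2 mu by simp
  ultimately have G1: "G 1 \<ge> 0" by (simp add: G_def)
  have G4: "G 4 < 0" by (simp add: G_def A_def B_def Q_def)
  obtain s where s: "1 \<le> s" "s \<le> 4" "G s = 0"
    using IVT2'[of G 4 0 1, OF less_imp_le[OF G4] G1 _ cont] by auto
  have "s \<noteq> 4" using s G4 by auto
  then have s4: "s < 4" using s by simp
  have Qpos: "Q s > 0" using s4 by (simp add: Q_def)
  define t where "t = sqrt (1 + 4 * Q s / lam^2)"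
  define u where "u = sqrt (1 + 4 * mu * Q s / lam^2)"
  have t2: "t^2 = 1 + 4 * Q s / lam^2" unfolding t_def
    using Qpos l2 by (intro real_sqrt_pow2) (simp add: less_imp_le)
  have u2: "u^2 = 1 + 4 * mu * Q s / lam^2" unfolding u_def
    using Qpos l2 mu by (intro real_sqrt_pow2) (simp add: less_imp_le)
  have t1: "t > 1" unfolding t_def using Qpos l2 by simp
  have u1: "u \<ge> 1" unfolding u_def using Qpos l2 mu by simp
  have As: "A s = (1 + t)/2" by (simp add: A_def t_def)
  have Bs: "B s = (u - 1)/2" by (simp add: B_def u_def)
  have sum: "A s + B s = s" using s(3) by (simp add: G_def)
  show ?thesis
  proof (rule exI[of _ "A s"], rule exI[of _ "B s"], intro conjI)
    show "A s > 1" using As t1 by simp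
    show "B s \<ge> 0" using Bs u1 by simp
    show "A s + B s \<le> 4" using sum s by simp
    have e1: "A s * (A s - 1) = Q s / lam^2"
      unfolding As using t2 by (simp add: field_simps power2_eq_square)
    have e2: "B s * (B s + 1) = mu * Q s / lam^2"
      unfolding Bs using u2 by (simp add: field_simps power2_eq_square)
    show "lam^2 * (A s * (A s - 1)) = (5 - A s - B s) * (4 - A s - B s)"
    proof -
      have bs: "B s = s - A s" using sum by simp
      have "lam^2 * (A s * (A s - 1)) = Q s" using e1 l2 by simp
      then show ?thesis unfolding bs Q_def by simp
    qed
    show "B s * (B s + 1) = (1 - lam)^2 * (A s * (A s - 1))"
      using e1 e2 by (simp add: mu_def)
  qed
qed
lemma bt_sqrt:
  assumes w: "\<And>i. w i > 0" and r: "r = (\<lambda>i. sqrt (w i))"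
  shows "bt1 r = w 1 * w 2 / w 4" "bt2 r = w 1 * w 3 / w 6" "bt3 r = w 1 * w 4 / w 5"
    "bt4 r = w 1 * w 5 / w 7" "bt5 lam r = lam^2 * (w 2 * w 3 / w 5)" "bt6 r = w 2 * w 4 / w 6"
    "bt7 r = w 2 * w 6 / w 7" "bt8 lam r = (1-lam)^2 * (w 3 * w 4 / w 7)"
  using w by (simp_all add: r bt_defs power_divide power_mult_distrib less_imp_le)

lemma exist_r:
  fixes a b lam :: real
  assumes a1: "a > 1" and b0: "b \<ge> 0" and ab: "a + b \<le> 4"
    and E1: "lam^2 * (a * (a - 1)) = (5 - a - b) * (4 - a - b)"
    and E2: "b * (b + 1) = (1 - lam)^2 * (a * (a - 1))"
  shows "\<exists>r. (\<forall>i. r i \<noteq> 0) \<and> bt1 r = b+1 \<and> bt2 r = a-1 \<and> bt3 r = 2 \<and> bt4 r = 5-a-b \<and>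
     bt5 lam r = 4-a-b \<and> bt6 r = 2 \<and> bt7 r = a \<and> bt8 lam r = b"
proof -
  define c where "c = 5 - a - b"
  have c: "c > 0" using ab by (simp add: c_def)
  define k where "k = sqrt (a / ((b+1)^2 * c))"
  have kpos: "k > 0" unfolding k_def using a1 b0 c by simp
  have kk: "k^2 * (b+1)^2 * c = a" unfolding k_def using a1 b0 c
    by (simp add: less_imp_le)
  define w where "w i = (if i = 1 then 1 else if i = 2 then (b+1)*k else if i = 3 then (a-1)*(b+1)*k^2/2
     else if i = 4 then k else if i = 5 then k/2 else if i = 6 then (b+1)*k^2/2 else k/(2*c))" for i :: 7
  have wpos: "w i > 0" for i
    using exhaust_7[of i] kpos a1 b0 c by (auto simp: w_def)
  define r where "r = (\<lambda>i. sqrt (w i))"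
  note bs = bt_sqrt[OF wpos r_def]
  have rnz: "\<forall>i. r i \<noteq> 0" using wpos by (simp add: r_def) (metis less_irrefl)
  have w7: "w 7 = k/(2*c)" by (simp add: w_def)
  show ?thesis
  proof (rule exI[of _ r], intro conjI)
    show "\<forall>i. r i \<noteq> 0" by (rule rnz)
    show "bt1 r = b+1" unfolding bs using kpos by (simp add: w_def)
    show "bt2 r = a-1" unfolding bs using kpos b0 by (simp add: w_def)
    show "bt3 r = 2" unfolding bs using kpos by (simp add: w_def)
    show "bt4 r = 5-a-b" unfolding bs w7 using kpos c by (simp add: w_def c_def)
    show "bt6 r = 2" unfolding bs using kpos b0 by (simp add: w_def power2_eq_square)
    show "bt7 r = a" unfolding bs
    proof -
      have "w 2 * w 6 / w 7 = k^2 * (b+1)^2 * c"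
        unfolding w7 using kpos c by (simp add: w_def field_simps power2_eq_square)
      then show "w 2 * w 6 / w 7 = a" using kk by simp
    qed
    show "bt5 lam r = 4-a-b" unfolding bs
    proof -
      have "lam^2 * (w 2 * w 3 / w 5) = lam^2 * ((a-1) * ((b+1)^2 * k^2))"
        using kpos by (simp add: w_def field_simps power2_eq_square)
      also have "\<dots> = lam^2 * (a * (a-1)) / c"
      proof -
        have "(b+1)^2*k^2 = a/c" using kk c by (simp add: field_simps)
        then show ?thesis by simp
      qed
      also have "\<dots> = 4 - a - b" using E1 c by (simp add: c_def field_simps)
      finally show "lam^2 * (w 2 * w 3 / w 5) = 4 - a - b" .
    qed
    show "bt8 lam r = b" unfolding bs
    proof -
      have "(1-lam)^2 * (w 3 * w 4 / w 7) = (1-lam)^2 * ((a-1) * (b+1) * c * k^2)"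
        unfolding w7 using kpos c by (simp add: w_def field_simps power2_eq_square)
      also have "\<dots> = (1-lam)^2 * (a * (a-1)) / (b+1)"
      proof -
        have "c*k^2 = a/(b+1)^2" using kk c b0 by (simp add: field_simps)
        then have "(a-1) * (b+1) * c * k^2 = (a-1) * (b+1) * (a/(b+1)^2)" by (simp add: mult.assoc)
        also have "\<dots> = a * (a-1) / (b+1)"
        proof -
          have hb: "b + 1 \<noteq> 0" using b0 by simp
          show ?thesis using hb by (simp add: power2_eq_square divide_simps)
        qed
        finally show ?thesis by simp
      qed
      also have "\<dots> = b" using E2 b0 by (simp add: field_simps)
      finally show "(1-lam)^2 * (w 3 * w 4 / w 7) = b" .
    qed
  qed
qed

theorem mainTheorem20:
  fixes lam :: real
  shows "einstein_nilradical (nbr lam)"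
proof -
  obtain a b where ab: "a > 1" "b \<ge> 0" "a + b \<le> 4"
     "lam^2 * (a * (a - 1)) = (5 - a - b) * (4 - a - b)"
     "b * (b + 1) = (1 - lam)^2 * (a * (a - 1))"
    using exist_ab[of lam] by blast
  obtain r where r: "\<forall>i. r i \<noteq> 0" "bt1 r = b+1" "bt2 r = a-1" "bt3 r = 2" "bt4 r = 5-a-b"
     "bt5 lam r = 4-a-b" "bt6 r = 2" "bt7 r = a" "bt8 lam r = b"
    using exist_r[OF ab] by blast
  have rnz: "\<And>i. r i \<noteq> 0" using r(1) by blast
  have sol: "is_nilsoliton (nbr lam) (ipw r) (Bw r)"
    unfolding is_nilsoliton_def
  proof (intro exI conjI allI)
    show "is_derivation (nbr lam) Dop" by (rule Dop_der)
    fix X :: "real^7"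
    show "ricci_op (nbr lam) (ipw r) (Bw r) X = (- 11/2) *\<^sub>R X + Dop X"
      unfolding vec_eq_iff forall_7
      by (simp add: ric1[OF rnz] ric2[OF rnz] ric3[OF rnz] ric4[OF rnz] ric5[OF rnz]
          ric6[OF rnz] ric7[OF rnz] r(2-9) Dop_comp dd_def algebra_simps)
  qed
  show ?thesis
    unfolding einstein_nilradical_def
    apply (intro conjI nbr_lie nbr_nil)
    apply (rule exI[of _ "ipw r"])
    apply (intro conjI ipw_inner[OF rnz])
    apply (rule exI[of _ "Bw r"])
    using Bw_onb[OF rnz] sol by simp
qed

end
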